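(* Let $n\ge2$, $\delta\in(0,n]$, $s\in[1,n/(n-1))$, $p\in[\delta/n,\ \delta/(n+s(1-n)))$ and $\kappa\in[0,\ n+s(1-n))$. Then there exists a constant $c$ depending only on $n,\delta,\kappa,s,p$ such that \[ \int_{\mathbb{R}^n}\frac{|f(y)|}{|x-y|^{s(n-1)}}\,dy\le c\,\big(M_\kappa f(x)\big)^{1-\frac{p(n-\kappa+s(1-n))}{\delta-\kappa p}}\Big(\int_{\mathbb{R}^n}|f(y)|^p\,d\mathcal{H}^{\delta}_\infty\Big)^{\frac{n-\kappa+s(1-n)}{\delta-\kappa p}} \] for all $x\in\mathbb{R}^n$ and all $f\in L^1_{loc}(\mathbb{R}^n)$.
   Context: For $\kappa\in[0,n)$ and $f\in L^1_{loc}(\mathbb{R}^n)$, $M_\kappa f(x)=\sup_{r>0} r^{\kappa-n}\int_{B(x,r)}|f(y)|\,dy$. For $E\subset\mathbb{R}^n$ and $\beta\in(0,n]$, $\mathcal{H}^{\beta}_\infty(E)=\inf\{\sum_i r_i^{\beta}: E\subset\bigcup_i B(x_i,r_i)\}$ over countable or finite coverings by open balls. For $g:\mathbb{R}^n\to[0,\infty]$, $\int_{\mathbb{R}^n} g\,d\mathcal{H}^{\beta}_\infty:=\int_0^\infty \mathcal{H}^{\beta}_\infty(\{x: g(x)>t\})\,dt$. *)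

theory Defs
  imports "HOL-Analysis.Analysis"
begin

definition ennpowr :: "ennreal \<Rightarrow> real \<Rightarrow> ennreal" where
  "ennpowr x a = (if x = \<infinity> then \<infinity> else ennreal (enn2real x powr a))"

definition locally_integrable :: "('a::euclidean_space \<Rightarrow> real) \<Rightarrow> bool" where
  "locally_integrable f \<longleftrightarrow> f \<in> borel_measurable lebesgue \<and>
     (\<forall>K. compact K \<longrightarrow> set_integrable lebesgue K f)"

definition frac_maximal :: "real \<Rightarrow> ('a::euclidean_space \<Rightarrow> real) \<Rightarrow> 'a \<Rightarrow> ennreal" where
  "frac_maximal \<kappa> f x = (SUP r\<in>{0<..}. ennreal (r powr (\<kappa> - real DIM('a))) *
      (\<integral>\<^sup>+ y\<in>ball x r. ennreal \<bar>f y\<bar> \<partial>lebesgue))"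

text \<open>Hausdorff content H^beta_infty: infimum of sum r_i^beta over countable coverings
  by open balls (finite coverings are included by allowing radius 0, i.e. empty balls).\<close>
definition hausdorff_content :: "real \<Rightarrow> 'a::euclidean_space set \<Rightarrow> ennreal" where
  "hausdorff_content \<beta> E = (INF cr\<in>{cr :: (nat \<Rightarrow> 'a) \<times> (nat \<Rightarrow> real).
        (\<forall>i. snd cr i \<ge> 0) \<and> E \<subseteq> (\<Union>i. ball (fst cr i) (snd cr i))}.
      (\<Sum>i. ennreal (snd cr i powr \<beta>)))"

definition choquet_integral :: "real \<Rightarrow> ('a::euclidean_space \<Rightarrow> real) \<Rightarrow> ennreal" where
  "choquet_integral \<beta> g = (\<integral>\<^sup>+ t\<in>{0<..}. hausdorff_content \<beta> {x. g x > t} \<partial>lborel)"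

end

theory Submission
  imports Defs
begin

lemma sf_leb: "sigma_finite_measure (lebesgue :: 'a::euclidean_space measure)"
proof -
  obtain A :: "'a set set" where A: "countable A" "A \<subseteq> sets lborel" "\<Union>A = space lborel" "\<forall>a\<in>A. emeasure lborel a \<noteq> \<infinity>"
    using sigma_finite_measure.sigma_finite_countable[OF sigma_finite_lborel] by blast
  show ?thesis
    apply (rule sigma_finite_measure.intro)
    apply (rule exI[of _ A])
    using A by (auto simp: emeasure_completion)
qed

lemma tonelli_leb:
  fixes g :: "'a::euclidean_space \<Rightarrow> ennreal" and k :: "real \<Rightarrow> ennreal"
  assumes g: "g \<in> borel_measurable lebesgue" and k: "k \<in> borel_measurable borel"
    and S: "S \<in> sets (lebesgue \<Otimes>\<^sub>M lborel)"
  shows "(\<integral>\<^sup>+y. g y * (\<integral>\<^sup>+u. k u * indicator S (y,u) \<partial>lborel) \<partial>lebesgue)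
       = (\<integral>\<^sup>+u. k u * (\<integral>\<^sup>+y. g y * indicator S (y,u) \<partial>lebesgue) \<partial>lborel)"
proof -
  interpret P: pair_sigma_finite lebesgue "lborel :: real measure"
    by (intro pair_sigma_finite.intro sf_leb sigma_finite_lborel)
  have m: "(\<lambda>(y,u). g y * k u * indicator S (y,u)) \<in> borel_measurable (lebesgue \<Otimes>\<^sub>M lborel)"
    using g k S by measurable
  have iS: "(\<lambda>z. indicator S z :: ennreal) \<in> borel_measurable (lebesgue \<Otimes>\<^sub>M lborel)"
    using S by measurable
  have s1: "(\<lambda>u. k u * indicator S (y,u)) \<in> borel_measurable lborel" for y
    using measurable_Pair2[OF iS, of y] k by (simp add: space_pair_measure)
  have s2: "(\<lambda>y. g y * indicator S (y,u)) \<in> borel_measurable lebesgue" for u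
    using measurable_Pair1[OF iS, of u] g by (simp add: space_pair_measure)
  have "(\<integral>\<^sup>+y. g y * (\<integral>\<^sup>+u. k u * indicator S (y,u) \<partial>lborel) \<partial>lebesgue)
      = (\<integral>\<^sup>+y. (\<integral>\<^sup>+u. g y * (k u * indicator S (y,u)) \<partial>lborel) \<partial>lebesgue)"
    by (intro nn_integral_cong) (simp add: nn_integral_cmult[OF s1])
  also have "\<dots> = (\<integral>\<^sup>+u. (\<integral>\<^sup>+y. g y * (k u * indicator S (y,u)) \<partial>lebesgue) \<partial>lborel)"
    using P.Fubini'[of "\<lambda>y u. g y * (k u * indicator S (y,u))"] m by (simp add: mult.assoc)
  also have "\<dots> = (\<integral>\<^sup>+u. k u * (\<integral>\<^sup>+y. g y * indicator S (y,u) \<partial>lebesgue) \<partial>lborel)"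
    by (intro nn_integral_cong) (simp add: nn_integral_cmult[OF s2, symmetric] mult_ac)
  finally show ?thesis .
qed

lemma S2: fixes x :: "'a::euclidean_space"
  shows "{(y,r). dist x y < r} \<in> sets (lebesgue \<Otimes>\<^sub>M (lborel::real measure))"
proof -
  have d: "(\<lambda>y. dist x y) \<in> borel_measurable (lebesgue :: 'a measure)"
    by (intro measurable_completion) (simp add: borel_measurable_continuous_onI continuous_on_dist continuous_on_const continuous_on_id)
  have "{(y,r). dist x y < r} = {z \<in> space (lebesgue \<Otimes>\<^sub>M (lborel::real measure)). dist x (fst z) < snd z}"
    by (auto simp: space_pair_measure)
  also have "\<dots> \<in> sets (lebesgue \<Otimes>\<^sub>M (lborel::real measure))"
    using d by measurable
  finally show ?thesis .
qed

lemma PI1: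
  fixes e c :: real assumes e: "e > 0" and c: "c \<ge> 0"
  shows "(\<integral>\<^sup>+u. ennreal (u powr (e-1)) * indicator {0..c} u \<partial>lborel) = ennreal (c powr e / e)"
proof -
  have "((\<lambda>x. x powr (e-1)) has_integral (c powr (e-1+1) / (e-1+1))) {0..c}"
    by (rule has_integral_powr_from_0) (use e c in auto)
  then show ?thesis
    by (subst nn_integral_has_integral_lebesgue'[of "{0..c}"]) auto
qed

lemma PI1':
  fixes e c :: real assumes e: "e > 0" and c: "c \<ge> 0"
  shows "(\<integral>\<^sup>+u. ennreal (u powr (e-1)) * indicator {0<..<c} u \<partial>lborel) = ennreal (c powr e / e)"
proof -
  have ae: "AE u in lborel. u \<noteq> 0 \<and> u \<noteq> c"
    using AE_lborel_singleton[of 0] AE_lborel_singleton[of c] by eventually_elim auto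
  have "(\<integral>\<^sup>+u. ennreal (u powr (e-1)) * indicator {0<..<c} u \<partial>lborel) = (\<integral>\<^sup>+u. ennreal (u powr (e-1)) * indicator {0..c} u \<partial>lborel)"
    by (intro nn_integral_cong_AE) (use ae in eventually_elim, auto simp: indicator_def)
  with PI1[OF e c] show ?thesis by simp
qed

lemma PI2:
  fixes e r :: real assumes e: "e > 0" and r: "r > 0"
  shows "(\<integral>\<^sup>+u. ennreal (u powr (-e-1)) * indicator {r..} u \<partial>lborel) = ennreal (r powr (-e) / e)"
proof -
  have "((\<lambda>x. x powr (-e-1)) has_integral -(r powr (-e-1+1)) / (-e-1+1)) {r..}"
    by (rule has_integral_powr_to_inf) (use e r in auto)
  then show ?thesis
    using r by (subst nn_integral_has_integral_lebesgue'[of "{r..}"]) auto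
qed

lemma PI2':
  fixes e r :: real assumes e: "e > 0" and r: "r > 0"
  shows "(\<integral>\<^sup>+u. ennreal (u powr (-e-1)) * indicator {r<..} u \<partial>lborel) = ennreal (r powr (-e) / e)"
proof -
  have ae: "AE u in lborel. u \<noteq> r"
    by (intro AE_lborel_singleton)
  have "(\<integral>\<^sup>+u. ennreal (u powr (-e-1)) * indicator {r<..} u \<partial>lborel) = (\<integral>\<^sup>+u. ennreal (u powr (-e-1)) * indicator {r..} u \<partial>lborel)"
    by (intro nn_integral_cong_AE) (use ae in eventually_elim, auto simp: indicator_def)
  with PI2[OF e r] show ?thesis by simp
qed


lemma sum_pow_le:
  fixes b :: "nat \<Rightarrow> real" assumes b: "\<And>i. 0 \<le> b i" and sb: "summable b" and q: "1 \<le> q"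
  shows "(\<Sum>i. ennreal (b i powr q)) \<le> ennreal ((\<Sum>i. b i) powr q)"
proof -
  define S where "S = (\<Sum>i. b i)"
  have S0: "0 \<le> S" unfolding S_def using b sb by (simp add: suminf_nonneg)
  have bS: "b i \<le> S" for i
    using sum_le_suminf[OF sb, of "{i}"] b by (auto simp: S_def)
  have pt: "b i powr q \<le> b i * S powr (q - 1)" for i
  proof (cases "b i = 0")
    case True then show ?thesis by simp
  next
    case False
    then have bp: "b i > 0" using b[of i] by simp
    have "b i powr q = b i * b i powr (q - 1)"
      using bp by (simp add: powr_mult_base)
    also have "\<dots> \<le> b i * S powr (q - 1)"
      using bp bS[of i] q by (intro mult_left_mono powr_mono2) auto
    finally show ?thesis .
  qed
  have "(\<Sum>i. ennreal (b i powr q)) \<le> (\<Sum>i. ennreal (S powr (q - 1)) * ennreal (b i))"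
    using pt b S0 by (intro suminf_le) (auto simp: ennreal_mult'[symmetric] mult.commute intro!: ennreal_leI)
  also have "\<dots> = ennreal (S powr (q - 1)) * ennreal S"
    using suminf_ennreal2[OF b sb] by (simp add: S_def)
  also have "\<dots> = ennreal (S powr q)"
  proof (cases "S = 0")
    case True then show ?thesis by simp
  next
    case False
    then have "S > 0" using S0 by simp
    then show ?thesis
      by (simp add: ennreal_mult'[symmetric] mult.commute powr_mult_base)
  qed
  finally show ?thesis by (simp add: S_def)
qed

lemma emeasure_leb_ball:
  fixes c :: "'a::euclidean_space"
  assumes "r \<ge> 0"
  shows "emeasure lebesgue (ball c r) = ennreal (unit_ball_vol (real DIM('a)) * r powr real DIM('a))"
proof (cases "r = 0")
  case False
  then have "r > 0" using assms by simp
  then show ?thesis using emeasure_ball[of r c] by (simp add: powr_realpow)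
qed simp

lemma ball_inter_bound:
  fixes c x :: "'a::euclidean_space"
  assumes r: "r \<ge> 0" and \<rho>: "\<rho> > 0" and \<gamma>: "0 < \<gamma>" "\<gamma> \<le> real DIM('a)"
  shows "emeasure lebesgue (ball c r \<inter> ball x \<rho>)
     \<le> ennreal (unit_ball_vol (real DIM('a)) * \<rho> powr (real DIM('a) - \<gamma>) * r powr \<gamma>)"
proof (cases "r = 0")
  case True then show ?thesis by simp
next
  case False
  then have rp: "r > 0" using r by simp
  define \<omega> where "\<omega> = unit_ball_vol (real DIM('a))"
  define n where "n = real DIM('a)"
  have \<omega>: "\<omega> > 0" by (simp add: \<omega>_def)
  show ?thesis
  proof (cases "r \<le> \<rho>")
    case True
    have "emeasure lebesgue (ball c r \<inter> ball x \<rho>) \<le> emeasure lebesgue (ball c r)"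
      by (intro emeasure_mono) auto
    also have "\<dots> = ennreal (\<omega> * r powr n)" unfolding \<omega>_def n_def by (rule emeasure_leb_ball[OF r])
    also have "r powr n = r powr (n - \<gamma>) * r powr \<gamma>" by (simp add: powr_add[symmetric])
    also have "\<dots> \<le> \<rho> powr (n - \<gamma>) * r powr \<gamma>"
      using rp True \<gamma> by (intro mult_right_mono powr_mono2) (auto simp: n_def)
    finally show ?thesis using \<omega> by (simp add: \<omega>_def n_def mult.assoc ennreal_leI)
  next
    case False
    have "emeasure lebesgue (ball c r \<inter> ball x \<rho>) \<le> emeasure lebesgue (ball x \<rho>)"
      by (intro emeasure_mono) auto
    also have "\<dots> = ennreal (\<omega> * \<rho> powr n)" unfolding \<omega>_def n_def by (rule emeasure_leb_ball) (use \<rho> in simp)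
    also have "\<rho> powr n = \<rho> powr (n - \<gamma>) * \<rho> powr \<gamma>" by (simp add: powr_add[symmetric])
    also have "\<dots> \<le> \<rho> powr (n - \<gamma>) * r powr \<gamma>"
      using \<rho> False \<gamma> by (intro mult_left_mono powr_mono2) auto
    finally show ?thesis using \<omega> by (simp add: \<omega>_def n_def mult.assoc ennreal_leI)
  qed
qed

lemma HC_bound:
  fixes E :: "'a::euclidean_space set" and x :: 'a
  assumes E: "E \<in> sets lebesgue" and \<rho>: "\<rho> > 0" and \<delta>: "0 < \<delta>" and q: "1 \<le> q" "\<delta> * q \<le> real DIM('a)"
  shows "emeasure lebesgue (E \<inter> ball x \<rho>)
     \<le> ennreal (unit_ball_vol (real DIM('a)) * \<rho> powr (real DIM('a) - \<delta> * q)) * ennpowr (hausdorff_content \<delta> E) q"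
proof -
  define K where "K = unit_ball_vol (real DIM('a)) * \<rho> powr (real DIM('a) - \<delta> * q)"
  have K: "K > 0" using \<rho> by (simp add: K_def)
  have fin: "emeasure lebesgue (E \<inter> ball x \<rho>) \<noteq> top"
  proof -
    have "emeasure lebesgue (E \<inter> ball x \<rho>) \<le> emeasure lebesgue (ball x \<rho>)"
      by (intro emeasure_mono) auto
    also have "\<dots> < top" using \<rho> by (subst emeasure_leb_ball) auto
    finally show ?thesis by simp
  qed
  define m where "m = measure lebesgue (E \<inter> ball x \<rho>)"
  have em: "emeasure lebesgue (E \<inter> ball x \<rho>) = ennreal m"
    using fin by (simp add: m_def emeasure_eq_ennreal_measure)
  have m0: "m \<ge> 0" by (simp add: m_def)
  have cov: "ennreal ((m / K) powr (1 / q)) \<le> (\<Sum>i. ennreal (snd cr i powr \<delta>))"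
    if cr: "(\<forall>i. snd cr i \<ge> 0) \<and> E \<subseteq> (\<Union>i. ball (fst cr i) (snd cr i))" for cr :: "(nat \<Rightarrow> 'a) \<times> (nat \<Rightarrow> real)"
  proof (cases "(\<Sum>i. ennreal (snd cr i powr \<delta>)) = top")
    case True then show ?thesis by simp
  next
    case False
    define c where "c = fst cr"
    define r where "r = snd cr"
    define b where "b i = r i powr \<delta>" for i
    have r0: "r i \<ge> 0" for i using cr by (simp add: r_def)
    have b0: "b i \<ge> 0" for i by (simp add: b_def)
    have sb: "summable b"
    proof (rule summable_suminf_not_top)
      show "0 \<le> b i" for i by (rule b0)
      show "(\<Sum>i. ennreal (b i)) \<noteq> top" using False unfolding b_def r_def .
    qed
    define S where "S = (\<Sum>i. b i)"
    have S0: "S \<ge> 0" using b0 sb by (simp add: S_def suminf_nonneg)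
    have "ennreal m = emeasure lebesgue (E \<inter> ball x \<rho>)" by (simp add: em)
    also have "\<dots> \<le> emeasure lebesgue (\<Union>i. ball (c i) (r i) \<inter> ball x \<rho>)"
      using cr by (intro emeasure_mono) (auto simp: c_def r_def)
    also have "\<dots> \<le> (\<Sum>i. emeasure lebesgue (ball (c i) (r i) \<inter> ball x \<rho>))"
      by (intro emeasure_subadditive_countably) auto
    also have "\<dots> \<le> (\<Sum>i. ennreal K * ennreal (b i powr q))"
    proof (intro suminf_le)
      fix i
      have "emeasure lebesgue (ball (c i) (r i) \<inter> ball x \<rho>)
          \<le> ennreal (unit_ball_vol (real DIM('a)) * \<rho> powr (real DIM('a) - \<delta> * q) * r i powr (\<delta> * q))"
        using r0 \<rho> \<delta> q by (intro ball_inter_bound) auto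
      also have "r i powr (\<delta> * q) = b i powr q" by (simp add: b_def powr_powr)
      finally show "emeasure lebesgue (ball (c i) (r i) \<inter> ball x \<rho>) \<le> ennreal K * ennreal (b i powr q)"
        using K by (simp add: K_def ennreal_mult)
    qed auto
    also have "\<dots> = ennreal K * (\<Sum>i. ennreal (b i powr q))" by simp
    also have "\<dots> \<le> ennreal K * ennreal (S powr q)"
      unfolding S_def by (intro mult_left_mono sum_pow_le b0 sb q) auto
    also have "\<dots> = ennreal (K * S powr q)" using K by (simp add: ennreal_mult)
    finally have "m \<le> K * S powr q" using K S0 by (simp add: ennreal_le_iff)
    then have "m / K \<le> S powr q" using K by (simp add: field_simps)
    then have "(m / K) powr (1 / q) \<le> (S powr q) powr (1 / q)"
      using m0 K q by (intro powr_mono2) auto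
    also have "\<dots> = S" using q S0 by (simp add: powr_powr)
    finally have "ennreal ((m / K) powr (1 / q)) \<le> ennreal S" by (rule ennreal_leI)
    also have "ennreal S = (\<Sum>i. ennreal (snd cr i powr \<delta>))"
      using suminf_ennreal2[OF b0 sb] by (simp add: S_def b_def r_def)
    finally show ?thesis .
  qed
  have H: "ennreal ((m / K) powr (1 / q)) \<le> hausdorff_content \<delta> E"
    unfolding hausdorff_content_def by (rule INF_greatest) (use cov in auto)
  show ?thesis
  proof (cases "hausdorff_content \<delta> E = top")
    case True
    then show ?thesis using K by (simp add: ennpowr_def K_def[symmetric] ennreal_mult_top)
  next
    case False
    then obtain h where h: "hausdorff_content \<delta> E = ennreal h" "h \<ge> 0"
      by (cases "hausdorff_content \<delta> E") auto
    have "(m / K) powr (1 / q) \<le> h" using H h by (simp add: ennreal_le_iff)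
    then have "((m / K) powr (1 / q)) powr q \<le> h powr q"
      using q by (intro powr_mono2) auto
    then have "m / K \<le> h powr q" using q m0 K by (simp add: powr_powr)
    then have "m \<le> K * h powr q" using K by (simp add: field_simps)
    then show ?thesis using h K em
      by (simp add: ennpowr_def K_def[symmetric] ennreal_mult[symmetric] ennreal_leI)
  qed
qed



lemma R1:
  fixes u hr Jr e :: real
  assumes u: "u > 0" and hr: "hr \<ge> 0" and uh: "u * hr \<le> Jr" and e: "e \<ge> 1"
  shows "u powr (e-1) * hr powr e \<le> Jr powr (e-1) * hr"
proof (cases "hr = 0")
  case True then show ?thesis by simp
next
  case False
  then have hp: "hr > 0" using hr by simp
  have "u powr (e-1) * hr powr e = (u * hr) powr (e-1) * hr"
    using u hp by (simp add: powr_mult powr_mult_base mult_ac)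
  also have "\<dots> \<le> Jr powr (e-1) * hr"
    using uh u hp e by (intro mult_right_mono powr_mono2) auto
  finally show ?thesis .
qed

lemma R2:
  fixes \<rho> Jr p \<delta> n \<omega> :: real
  assumes \<rho>: "\<rho> > 0" and J: "Jr > 0" and p: "p > 0"
  shows "\<omega> * \<rho> powr n * (Jr / \<rho> powr \<delta>) powr (1/p) + (Jr / \<rho> powr \<delta>) powr (1/p - 1) * (\<omega> * \<rho> powr (n - \<delta>)) * Jr / p
    = \<omega> * (1 + 1/p) * \<rho> powr (n - \<delta>/p) * Jr powr (1/p)"
proof -
  have a: "\<rho> powr n * (Jr / \<rho> powr \<delta>) powr (1/p) = \<rho> powr (n - \<delta>/p) * Jr powr (1/p)"
    using \<rho> J by (simp add: powr_def exp_add[symmetric] exp_diff[symmetric] ln_div algebra_simps)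
  have b': "(Jr / \<rho> powr \<delta>) powr (1/p - 1) * \<rho> powr (n - \<delta>) = \<rho> powr (n - \<delta>/p) * Jr powr (1/p - 1)"
    using \<rho> J by (simp add: powr_def exp_add[symmetric] exp_diff[symmetric] ln_div algebra_simps)
  have b: "(Jr / \<rho> powr \<delta>) powr (1/p - 1) * \<rho> powr (n - \<delta>) * Jr = \<rho> powr (n - \<delta>/p) * Jr powr (1/p)"
    using J by (simp add: b' mult.assoc powr_mult_base mult.commute[of _ Jr])
  show ?thesis
    using a b by (simp add: algebra_simps add_divide_distrib)
qed


lemma HC_mono: "A \<subseteq> B \<Longrightarrow> hausdorff_content \<beta> A \<le> hausdorff_content \<beta> B"
  unfolding hausdorff_content_def by (rule INF_superset_mono) auto

lemma level_antimono: fixes g :: "'a::euclidean_space \<Rightarrow> real" and t :: real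
  shows "t \<le> t' \<Longrightarrow> hausdorff_content \<beta> {y. t' < g y} \<le> hausdorff_content \<beta> {y. t < g y}"
  by (rule HC_mono) (use le_less_trans in blast)

lemma downclosed_borel:
  fixes D :: "real set"
  assumes dc: "\<And>t t'. t \<in> D \<Longrightarrow> t' \<le> t \<Longrightarrow> t' \<in> D"
  shows "D \<in> sets borel"
proof (cases "D = {}")
  case True then show ?thesis by simp
next
  case ne: False
  show ?thesis
  proof (cases "bdd_above D")
    case False
    have "D = UNIV"
    proof safe
      fix t
      from False obtain t' where "t' \<in> D" "t < t'"
        unfolding bdd_above_def by (meson not_le)
      then show "t \<in> D" using dc by (meson less_imp_le)
    qed simp
    then show ?thesis by simp
  next
    case bdd: True
    define s where "s = Sup D"
    have up: "t \<le> s" if "t \<in> D" for t using cSup_upper[OF that bdd] by (simp add: s_def)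
    have lo: "t \<in> D" if "t < s" for t
    proof -
      obtain t' where "t' \<in> D" "t < t'" using \<open>t < s\<close> less_cSup_iff[OF ne bdd] by (auto simp: s_def)
      then show ?thesis using dc by (meson less_imp_le)
    qed
    show ?thesis
    proof (cases "s \<in> D")
      case True
      have "D = {..s}"
      proof (intro set_eqI iffI)
        fix t assume "t \<in> D" then show "t \<in> {..s}" using up by simp
      next
        fix t assume "t \<in> {..s}" then show "t \<in> D" using dc[OF True] by simp
      qed
      then show ?thesis by simp
    next
      case False
      have "D = {..<s}"
      proof (intro set_eqI iffI)
        fix t assume t: "t \<in> D" then have "t \<noteq> s" using False by metis
        then show "t \<in> {..<s}" using up[OF t] by simp
      next
        fix t assume "t \<in> {..<s}" then show "t \<in> D" using lo by simp
      qed
      then show ?thesis by simp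
    qed
  qed
qed

lemma level_meas: fixes g :: "'a::euclidean_space \<Rightarrow> real"
  shows "(\<lambda>t. hausdorff_content \<beta> {y. t < g y}) \<in> borel_measurable borel"
proof (rule borel_measurableI_greater)
  fix c :: ennreal
  have "{t. c < hausdorff_content \<beta> {y. t < g y}} \<in> sets borel"
  proof (rule downclosed_borel)
    fix t t' :: real assume "t \<in> {t. c < hausdorff_content \<beta> {y. t < g y}}" "t' \<le> t"
    then show "t' \<in> {t. c < hausdorff_content \<beta> {y. t < g y}}"
      using level_antimono[of t' t \<beta> g] by auto
  qed
  then show "{t \<in> space borel. c < hausdorff_content \<beta> {y. t < g y}} \<in> sets borel" by simp
qed

lemma level_le_J: fixes g :: "'a::euclidean_space \<Rightarrow> real"
  assumes u: "u > 0"
  shows "ennreal u * hausdorff_content \<beta> {y. u < g y} \<le> choquet_integral \<beta> g"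
proof -
  have "ennreal u * hausdorff_content \<beta> {y. u < g y} = (\<integral>\<^sup>+t. hausdorff_content \<beta> {y. u < g y} * indicator {0<..u} t \<partial>lborel)"
    using u by (subst nn_integral_cmult_indicator) (auto simp: mult.commute)
  also have "\<dots> \<le> (\<integral>\<^sup>+t. hausdorff_content \<beta> {y. t < g y} * indicator {0<..} t \<partial>lborel)"
    by (intro nn_integral_mono) (auto simp: indicator_def intro!: level_antimono)
  also have "\<dots> = choquet_integral \<beta> g" by (simp add: choquet_integral_def)
  finally show ?thesis .
qed



lemma levelset_meas:
  fixes f :: "'a::euclidean_space \<Rightarrow> real"
  assumes f: "f \<in> borel_measurable lebesgue"
  shows "{y. u < \<bar>f y\<bar> powr p} \<in> sets lebesgue"
proof -
  have "{y \<in> space lebesgue. u < \<bar>f y\<bar> powr p} \<in> sets lebesgue" using f by measurable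
  then show ?thesis by simp
qed

lemma layer_ball:
  fixes f :: "'a::euclidean_space \<Rightarrow> real" and x :: 'a
  assumes f: "f \<in> borel_measurable lebesgue" and p: "p > 0"
  shows "(\<integral>\<^sup>+y. ennreal \<bar>f y\<bar> * indicator (ball x \<rho>) y \<partial>lebesgue)
    = (\<integral>\<^sup>+u. ennreal (u powr (1/p - 1) / p) *
         (emeasure lebesgue ({y. u < \<bar>f y\<bar> powr p} \<inter> ball x \<rho>) * indicator {0<..} u) \<partial>lborel)"
proof -
  define S where "S = {(y,u). 0 < u \<and> u < \<bar>f y\<bar> powr p}"
  have S: "S \<in> sets (lebesgue \<Otimes>\<^sub>M (lborel::real measure))"
  proof -
    have "S = {z \<in> space (lebesgue \<Otimes>\<^sub>M (lborel::real measure)). 0 < snd z \<and> snd z < \<bar>f (fst z)\<bar> powr p}"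
      by (auto simp: space_pair_measure S_def)
    also have "\<dots> \<in> sets (lebesgue \<Otimes>\<^sub>M (lborel::real measure))"
      using f by measurable
    finally show ?thesis .
  qed
  define k where "k u = ennreal (u powr (1/p - 1) / p)" for u :: real
  have k: "k \<in> borel_measurable borel" unfolding k_def by measurable
  have inner: "ennreal \<bar>f y\<bar> = (\<integral>\<^sup>+u. k u * indicator S (y,u) \<partial>lborel)" for y
  proof -
    define v where "v = \<bar>f y\<bar> powr p"
    have v0: "v \<ge> 0" by (simp add: v_def)
    have "(\<integral>\<^sup>+u. k u * indicator S (y,u) \<partial>lborel)
        = (\<integral>\<^sup>+u. ennreal (1/p) * (ennreal (u powr (1/p - 1)) * indicator {0<..<v} u) \<partial>lborel)"
      using p by (intro nn_integral_cong)
        (auto simp: k_def S_def v_def indicator_def ennreal_mult'[symmetric] divide_inverse mult.commute)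
    also have "\<dots> = ennreal (1/p) * (\<integral>\<^sup>+u. ennreal (u powr (1/p - 1)) * indicator {0<..<v} u \<partial>lborel)"
      by (intro nn_integral_cmult) measurable
    also have "\<dots> = ennreal (1/p) * ennreal (v powr (1/p) / (1/p))"
      using PI1'[of "1/p" v] p v0 by simp
    also have "\<dots> = ennreal (v powr (1/p))"
      using p by (simp add: ennreal_mult'[symmetric])
    also have "v powr (1/p) = \<bar>f y\<bar>" using p by (simp add: v_def powr_powr)
    finally show ?thesis by simp
  qed
  have "(\<integral>\<^sup>+y. ennreal \<bar>f y\<bar> * indicator (ball x \<rho>) y \<partial>lebesgue)
      = (\<integral>\<^sup>+y. indicator (ball x \<rho>) y * (\<integral>\<^sup>+u. k u * indicator S (y,u) \<partial>lborel) \<partial>lebesgue)"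
    by (intro nn_integral_cong) (simp add: inner[symmetric] mult.commute)
  also have "\<dots> = (\<integral>\<^sup>+u. k u * (\<integral>\<^sup>+y. indicator (ball x \<rho>) y * indicator S (y,u) \<partial>lebesgue) \<partial>lborel)"
    by (intro tonelli_leb k S borel_measurable_indicator sets_completionI_sets) simp
  also have "\<dots> = (\<integral>\<^sup>+u. k u * (emeasure lebesgue ({y. u < \<bar>f y\<bar> powr p} \<inter> ball x \<rho>) * indicator {0<..} u) \<partial>lborel)"
  proof (intro nn_integral_cong)
    fix u :: real
    show "k u * (\<integral>\<^sup>+y. indicator (ball x \<rho>) y * indicator S (y,u) \<partial>lebesgue)
        = k u * (emeasure lebesgue ({y. u < \<bar>f y\<bar> powr p} \<inter> ball x \<rho>) * indicator {0<..} u)"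
    proof (cases "u > 0")
      case True
      have "(\<integral>\<^sup>+y. indicator (ball x \<rho>) y * indicator S (y,u) \<partial>lebesgue)
          = (\<integral>\<^sup>+y. indicator ({y. u < \<bar>f y\<bar> powr p} \<inter> ball x \<rho>) y \<partial>lebesgue)"
        using True by (intro nn_integral_cong) (auto simp: indicator_def S_def)
      also have "\<dots> = emeasure lebesgue ({y. u < \<bar>f y\<bar> powr p} \<inter> ball x \<rho>)"
        using levelset_meas[OF f, of u p] by (intro nn_integral_indicator) auto
      finally show ?thesis using True by simp
    next
      case False
      then have "\<And>y. indicator S (y,u) = (0::ennreal)" by (simp add: S_def)
      then show ?thesis using False by simp
    qed
  qed
  finally show ?thesis by (simp add: k_def)
qed



lemma ball_bound:
  fixes f :: "'a::euclidean_space \<Rightarrow> real" and x :: 'a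
  assumes f: "f \<in> borel_measurable lebesgue" and \<rho>: "\<rho> > 0" and \<delta>: "0 < \<delta>" "\<delta> \<le> real DIM('a)"
    and p: "p > 0" "\<delta> / real DIM('a) \<le> p"
  shows "(\<integral>\<^sup>+y. ennreal \<bar>f y\<bar> * indicator (ball x \<rho>) y \<partial>lebesgue)
    \<le> ennreal (unit_ball_vol (real DIM('a)) * (1 + 1/p) * \<rho> powr (real DIM('a) - \<delta>/p))
       * ennpowr (choquet_integral \<delta> (\<lambda>y. \<bar>f y\<bar> powr p)) (1/p)"
proof -
  define n where "n = real DIM('a)"
  define \<omega> where "\<omega> = unit_ball_vol n"
  define J where "J = choquet_integral \<delta> (\<lambda>y. \<bar>f y\<bar> powr p)"
  define h where "h u = hausdorff_content \<delta> {y. u < \<bar>f y\<bar> powr p}" for u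
  define m where "m u = emeasure lebesgue ({y. u < \<bar>f y\<bar> powr p} \<inter> ball x \<rho>)" for u
  define KB where "KB = \<omega> * (1 + 1/p) * \<rho> powr (n - \<delta>/p)"
  have n0: "n > 0" by (simp add: n_def)
  have \<omega>0: "\<omega> > 0" by (simp add: \<omega>_def n_def)
  have KB: "KB > 0" unfolding KB_def using \<omega>0 p \<rho> by (intro mult_pos_pos) (auto intro: add_pos_pos)
  have LHS: "(\<integral>\<^sup>+y. ennreal \<bar>f y\<bar> * indicator (ball x \<rho>) y \<partial>lebesgue)
      = (\<integral>\<^sup>+u. ennreal (u powr (1/p - 1) / p) * (m u * indicator {0<..} u) \<partial>lborel)"
    unfolding m_def by (rule layer_ball[OF f p(1)])
  have hJ: "ennreal u * h u \<le> J" if "u > 0" for u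
    unfolding h_def J_def using level_le_J[OF that, of \<delta> "\<lambda>y. \<bar>f y\<bar> powr p"] by simp
  have Jint: "J = (\<integral>\<^sup>+u. h u * indicator {0<..} u \<partial>lborel)"
    by (simp add: J_def choquet_integral_def h_def)
  have hmeas: "(\<lambda>u. h u * indicator {0<..} u) \<in> borel_measurable lborel"
    unfolding h_def using level_meas[of \<delta> "\<lambda>y. \<bar>f y\<bar> powr p"] by measurable
  have mset: "\<And>u. {y. u < \<bar>f y\<bar> powr p} \<in> sets lebesgue" by (rule levelset_meas[OF f])
  have mV: "m u \<le> ennreal (\<omega> * \<rho> powr n)" for u
  proof -
    have "m u \<le> emeasure lebesgue (ball x \<rho>)" unfolding m_def by (intro emeasure_mono) auto
    also have "\<dots> = ennreal (\<omega> * \<rho> powr n)" unfolding \<omega>_def n_def by (rule emeasure_leb_ball) (use \<rho> in simp)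
    finally show ?thesis .
  qed
  have mH: "m u \<le> ennreal (\<omega> * \<rho> powr (n - \<delta> * q)) * ennpowr (h u) q" if "1 \<le> q" "\<delta> * q \<le> n" for u q
    unfolding m_def h_def \<omega>_def n_def using HC_bound[where x=x, OF mset \<rho> \<delta>(1) that[unfolded n_def]] by simp
  show ?thesis
  proof (cases "J = top")
    case True
    then show ?thesis using KB by (simp add: J_def[symmetric] KB_def[symmetric] \<omega>_def[symmetric] n_def[symmetric] ennpowr_def ennreal_mult_top)
  next
    case False
    then obtain Jr where Jr: "J = ennreal Jr" "Jr \<ge> 0" by (cases J) auto
    have hfin: "h u = ennreal (enn2real (h u)) \<and> u * enn2real (h u) \<le> Jr" if "u > 0" for u
    proof -
      have "ennreal u * h u \<le> ennreal Jr" using hJ[OF that] Jr by simp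
      moreover have "h u \<noteq> top"
      proof
        assume "h u = top"
        then have "ennreal u * h u = top" using that by (simp add: ennreal_mult_top)
        with \<open>ennreal u * h u \<le> ennreal Jr\<close> show False by (metis ennreal_neq_top top_unique)
      qed
      ultimately show ?thesis using that Jr
        by (cases "h u") (auto simp: ennreal_mult'[symmetric] ennreal_le_iff)
    qed
    have RHS: "ennreal KB * ennpowr J (1/p) = ennreal (KB * Jr powr (1/p))"
      using Jr KB by (simp add: ennpowr_def ennreal_mult)
    show ?thesis
    proof (cases "Jr = 0")
      case True
      have "m u * indicator {0<..} u = 0" for u
      proof (cases "u > 0")
        case u: True
        from hfin[OF u] True u have h0: "h u = 0"
          by (metis enn2real_nonneg ennreal_0 mult_le_0_iff not_less order_antisym)
        have "m u \<le> ennreal (\<omega> * \<rho> powr (n - \<delta> * 1)) * ennpowr (h u) 1"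
          using \<delta> by (intro mH) (auto simp: n_def)
        then show ?thesis using h0 by (simp add: ennpowr_def)
      qed simp
      then have "(\<integral>\<^sup>+u. ennreal (u powr (1/p - 1) / p) * (m u * indicator {0<..} u) \<partial>lborel) = 0"
        by (simp del: mult_eq_0_iff)
      then show ?thesis by (simp add: LHS)
    next
      case False
      then have Jp: "Jr > 0" using Jr by simp
      show ?thesis
      proof (cases "p < 1")
        case True
        define A where "A = \<omega> * \<rho> powr (n - \<delta> * (1/p))"
        define C where "C = A / p * Jr powr (1/p - 1)"
        have q1: "1 \<le> 1/p" using True p by simp
        have q2: "\<delta> * (1/p) \<le> n" using p \<delta> n0 by (simp add: n_def field_simps)
        have pt: "ennreal (u powr (1/p - 1) / p) * (m u * indicator {0<..} u) \<le> ennreal C * (h u * indicator {0<..} u)" for u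
        proof (cases "u > 0")
          case u: True
          define hr where "hr = enn2real (h u)"
          have hr: "h u = ennreal hr" "u * hr \<le> Jr" "hr \<ge> 0" using hfin[OF u] by (auto simp: hr_def)
          have "m u \<le> ennreal A * ennreal (hr powr (1/p))"
            using mH[OF q1 q2, of u] hr by (simp add: A_def ennpowr_def)
          then have "ennreal (u powr (1/p - 1) / p) * m u \<le> ennreal (u powr (1/p - 1) / p) * (ennreal A * ennreal (hr powr (1/p)))"
            by (rule mult_left_mono) simp
          also have "\<dots> = ennreal (A / p * (u powr (1/p - 1) * hr powr (1/p)))"
            using \<omega>0 p by (simp add: A_def ennreal_mult[symmetric] mult_ac)
          also have "\<dots> \<le> ennreal (A / p * (Jr powr (1/p - 1) * hr))"
            using R1[OF u hr(3) hr(2) q1] \<omega>0 p by (intro ennreal_leI mult_left_mono) (auto simp: A_def)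
          also have "\<dots> = ennreal C * h u"
            using \<omega>0 p hr by (simp add: C_def A_def ennreal_mult[symmetric] mult_ac)
          finally show ?thesis using u by simp
        qed simp
        have "(\<integral>\<^sup>+u. ennreal (u powr (1/p - 1) / p) * (m u * indicator {0<..} u) \<partial>lborel)
            \<le> (\<integral>\<^sup>+u. ennreal C * (h u * indicator {0<..} u) \<partial>lborel)"
          by (intro nn_integral_mono pt)
        also have "\<dots> = ennreal C * J" by (simp add: nn_integral_cmult[OF hmeas] Jint)
        also have "\<dots> = ennreal (C * Jr)"
        proof -
          have C0: "C \<ge> 0" using \<omega>0 p by (simp add: C_def A_def)
          show ?thesis by (simp only: ennreal_mult[OF C0 Jr(2)] Jr(1))
        qed
        also have "\<dots> \<le> ennreal (KB * Jr powr (1/p))"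
        proof (intro ennreal_leI)
          have "C * Jr = A / p * Jr powr (1/p)"
            using Jp by (simp add: C_def powr_diff)
          also have "\<dots> \<le> KB * Jr powr (1/p)"
            using \<omega>0 p \<rho> by (intro mult_right_mono) (auto simp: A_def KB_def field_simps)
          finally show "C * Jr \<le> KB * Jr powr (1/p)" .
        qed
        finally show ?thesis using RHS LHS by (simp add: KB_def \<omega>_def n_def J_def)
      next
        case False
        then have p1: "p \<ge> 1" by simp
        define V where "V = \<omega> * \<rho> powr n"
        define D where "D = \<omega> * \<rho> powr (n - \<delta>)"
        define u0 where "u0 = Jr / \<rho> powr \<delta>"
        have u0: "u0 > 0" using Jp \<rho> by (simp add: u0_def)
        have pt: "ennreal (u powr (1/p - 1) / p) * (m u * indicator {0<..} u)
           \<le> ennreal (V / p) * (ennreal (u powr (1/p - 1)) * indicator {0..u0} u)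
             + ennreal (u0 powr (1/p - 1) * D / p) * (h u * indicator {0<..} u)" for u
        proof (cases "u > 0")
          case u: True
          show ?thesis
          proof (cases "u \<le> u0")
            case True
            have "ennreal (u powr (1/p - 1) / p) * m u \<le> ennreal (u powr (1/p - 1) / p) * ennreal V"
              using mV[of u] by (intro mult_left_mono) (auto simp: V_def)
            also have "\<dots> = ennreal (V / p) * ennreal (u powr (1/p - 1))"
              using p \<omega>0 by (simp add: V_def ennreal_mult[symmetric] mult_ac)
            finally show ?thesis using u True by (simp add: add_increasing2)
          next
            case False
            define hr where "hr = enn2real (h u)"
            have hr: "h u = ennreal hr" "hr \<ge> 0" using hfin[OF u] by (auto simp: hr_def)
            have "m u \<le> ennreal D * ennpowr (h u) 1"
              using mH[of 1 u] \<delta> by (simp add: D_def n_def)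
            then have mD: "m u \<le> ennreal (D * hr)"
              using hr \<omega>0 \<rho> by (simp add: ennpowr_def ennreal_mult D_def)
            have "ennreal (u powr (1/p - 1) / p) * m u \<le> ennreal (u powr (1/p - 1) / p) * ennreal (D * hr)"
              using mD by (intro mult_left_mono) auto
            also have "\<dots> = ennreal (u powr (1/p - 1) / p * (D * hr))"
            proof -
              have Dh: "D * hr \<ge> 0" using \<omega>0 hr by (simp add: D_def)
              show ?thesis by (subst ennreal_mult[symmetric]) (use p Dh in auto)
            qed
            also have "\<dots> \<le> ennreal (u0 powr (1/p - 1) / p * (D * hr))"
            proof (intro ennreal_leI mult_right_mono divide_right_mono)
              show "u powr (1/p - 1) \<le> u0 powr (1/p - 1)"
                using False u0 p1 p by (intro powr_mono2') (auto simp: field_simps)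
            qed (use p \<omega>0 \<rho> hr in \<open>auto simp: D_def\<close>)
            also have "\<dots> = ennreal (u0 powr (1/p - 1) * D / p) * h u"
              using p hr \<omega>0 \<rho> by (simp add: ennreal_mult[symmetric] D_def mult_ac)
            finally show ?thesis using u by (simp add: add_increasing)
          qed
        qed simp
        have "(\<integral>\<^sup>+u. ennreal (u powr (1/p - 1) / p) * (m u * indicator {0<..} u) \<partial>lborel)
            \<le> (\<integral>\<^sup>+u. ennreal (V / p) * (ennreal (u powr (1/p - 1)) * indicator {0..u0} u)
             + ennreal (u0 powr (1/p - 1) * D / p) * (h u * indicator {0<..} u) \<partial>lborel)"
          by (intro nn_integral_mono pt)
        also have "\<dots> = ennreal (V / p) * (\<integral>\<^sup>+u. ennreal (u powr (1/p - 1)) * indicator {0..u0} u \<partial>lborel)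
             + ennreal (u0 powr (1/p - 1) * D / p) * (\<integral>\<^sup>+u. h u * indicator {0<..} u \<partial>lborel)"
          using hmeas by (simp add: nn_integral_add nn_integral_cmult)
        also have "\<dots> = ennreal (V / p) * ennreal (u0 powr (1/p) / (1/p)) + ennreal (u0 powr (1/p - 1) * D / p) * ennreal Jr"
          using PI1[of "1/p" u0] p u0 Jint Jr by simp
        also have "\<dots> = ennreal (V * u0 powr (1/p) + u0 powr (1/p - 1) * D * Jr / p)"
          using p \<omega>0 \<rho> u0 Jr by (simp add: ennreal_mult[symmetric] V_def D_def ennreal_plus[symmetric] del: ennreal_plus)
        also have "V * u0 powr (1/p) + u0 powr (1/p - 1) * D * Jr / p = KB * Jr powr (1/p)"
          unfolding V_def D_def u0_def KB_def using R2[OF \<rho> Jp p(1), of \<omega> n \<delta>] by (simp add: mult_ac)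
        finally show ?thesis using RHS LHS by (simp add: KB_def \<omega>_def n_def J_def)
      qed
    qed
  qed
qed



lemma R3:
  fixes Mr Jr \<alpha> \<beta> p :: real
  assumes M: "Mr > 0" and J: "Jr > 0" and \<alpha>: "\<alpha> > 0" and \<beta>: "\<beta> > 0" and p: "p > 0"
  defines "\<rho>0 \<equiv> (Jr powr (1/p) / Mr) powr (1/(\<alpha>+\<beta>))"
  shows "Mr * \<rho>0 powr \<alpha> = Mr powr (1 - \<alpha>/(\<alpha>+\<beta>)) * Jr powr (\<alpha>/(\<alpha>+\<beta>)/p)"
    and "Jr powr (1/p) * \<rho>0 powr (-\<beta>) = Mr powr (1 - \<alpha>/(\<alpha>+\<beta>)) * Jr powr (\<alpha>/(\<alpha>+\<beta>)/p)"
proof -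
  define s where "s = \<alpha> + \<beta>"
  define L where "L = ln Mr"
  define K where "K = ln Jr"
  have s: "s > 0" using \<alpha> \<beta> by (simp add: s_def)
  have r0: "\<rho>0 > 0" using M J by (simp add: \<rho>0_def)
  have lr: "ln \<rho>0 = (K / p - L) / s"
    using M J by (simp add: \<rho>0_def ln_powr ln_div K_def L_def s_def divide_simps)
  have R: "ln (Mr powr (1 - \<alpha>/s) * Jr powr (\<alpha>/s/p)) = (1 - \<alpha>/s) * L + \<alpha>/s/p * K"
    using M J by (simp add: ln_mult ln_powr K_def L_def)
  have l1: "ln (Mr * \<rho>0 powr \<alpha>) = L + \<alpha> * ((K / p - L) / s)"
    using M r0 by (simp add: ln_mult ln_powr lr L_def)
  have l2: "ln (Jr powr (1/p) * \<rho>0 powr (-\<beta>)) = K / p - \<beta> * ((K / p - L) / s)"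
    using J r0 by (simp add: ln_mult ln_powr lr K_def)
  have e1: "L + \<alpha> * ((K / p - L) / s) = (1 - \<alpha>/s) * L + \<alpha>/s/p * K"
    by (simp add: algebra_simps diff_divide_distrib)
  have e2: "K / p - \<beta> * ((K / p - L) / s) = (1 - \<alpha>/s) * L + \<alpha>/s/p * K"
  proof -
    obtain X where X: "X = K / p - L" by simp
    have "\<beta> = s - \<alpha>" by (simp add: s_def)
    then have "\<beta> * (X / s) = s * (X / s) - \<alpha> * (X / s)" by (simp only: left_diff_distrib)
    also have "s * (X / s) = X" using s by simp
    finally have "\<beta> * (X / s) = X - \<alpha> * (X / s)" .
    then have "K / p - \<beta> * (X / s) = L + \<alpha> * (X / s)" using X by linarith
    then show ?thesis using e1 X by simp
  qed
  show "Mr * \<rho>0 powr \<alpha> = Mr powr (1 - \<alpha>/(\<alpha>+\<beta>)) * Jr powr (\<alpha>/(\<alpha>+\<beta>)/p)"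
    using l1 e1 R M J r0 by (subst ln_inj_iff[symmetric]) (auto simp: s_def)
  show "Jr powr (1/p) * \<rho>0 powr (-\<beta>) = Mr powr (1 - \<alpha>/(\<alpha>+\<beta>)) * Jr powr (\<alpha>/(\<alpha>+\<beta>)/p)"
    using l2 e2 R M J r0 by (subst ln_inj_iff[symmetric]) (auto simp: s_def)
qed



lemma ennpowr_pos: "x > 0 \<Longrightarrow> ennpowr x e > 0"
  by (cases x) (auto simp: ennpowr_def)

lemma final_bound:
  fixes F :: "real \<Rightarrow> ennreal" and M J :: ennreal and a \<alpha> \<beta> KB p :: real
  assumes a: "a > 0" and \<alpha>: "\<alpha> > 0" and \<beta>: "\<beta> > 0" and KB: "KB > 0" and p: "p > 0"
    and F1: "\<And>\<rho>. \<rho> > 0 \<Longrightarrow> F \<rho> \<le> ennreal (\<rho> powr (\<alpha> + a)) * M"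
    and F2: "\<And>\<rho>. \<rho> > 0 \<Longrightarrow> F \<rho> \<le> ennreal (KB * \<rho> powr (a - \<beta>)) * ennpowr J (1/p)"
    and F0: "\<And>\<rho>. \<rho> \<le> 0 \<Longrightarrow> F \<rho> = 0"
  shows "(\<integral>\<^sup>+\<rho>. ennreal (a * \<rho> powr (-a-1)) * F \<rho> \<partial>lborel)
      \<le> ennreal (a/\<alpha> + a*KB/\<beta>) * ennpowr M (1 - \<alpha>/(\<alpha>+\<beta>)) * ennpowr J (\<alpha>/(\<alpha>+\<beta>)/p)"
proof -
  define c where "c = a/\<alpha> + a*KB/\<beta>"
  have c: "c > 0" unfolding c_def using a \<alpha> \<beta> KB by (intro add_pos_pos divide_pos_pos mult_pos_pos)
  have zero: "(\<integral>\<^sup>+\<rho>. ennreal (a * \<rho> powr (-a-1)) * F \<rho> \<partial>lborel) = 0" if "\<And>\<rho>. F \<rho> = 0"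
    using that by simp
  show ?thesis
  proof (cases "M = 0 \<or> J = 0")
    case True
    have "F \<rho> = 0" for \<rho>
    proof (cases "\<rho> > 0")
      case True
      show ?thesis
      proof (cases "M = 0")
        case True with F1[OF \<open>\<rho> > 0\<close>] show ?thesis by simp
      next
        case False
        with \<open>M = 0 \<or> J = 0\<close> have "J = 0" by simp
        with F2[OF \<open>\<rho> > 0\<close>] show ?thesis by (simp add: ennpowr_def)
      qed
    qed (simp add: F0)
    then show ?thesis using zero by simp
  next
    case False
    then have M0: "M > 0" and J0: "J > 0" by (auto simp: zero_less_iff_neq_zero)
    show ?thesis
    proof (cases "M = top \<or> J = top")
      case True
      have "ennpowr M (1 - \<alpha>/(\<alpha>+\<beta>)) * ennpowr J (\<alpha>/(\<alpha>+\<beta>)/p) = top"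
        using True ennpowr_pos[OF M0] ennpowr_pos[OF J0]
        by (auto simp: ennpowr_def ennreal_mult_eq_top_iff ennreal_top_mult ennreal_mult_top)
      then have "ennreal c * ennpowr M (1 - \<alpha>/(\<alpha>+\<beta>)) * ennpowr J (\<alpha>/(\<alpha>+\<beta>)/p) = top"
        using c by (simp add: mult.assoc ennreal_mult_top)
      then show ?thesis by (simp add: c_def)
    next
      case False
      then obtain Mr Jr where Mr: "M = ennreal Mr" "Mr > 0" and Jr: "J = ennreal Jr" "Jr > 0"
        using M0 J0 by (cases M; cases J) auto
      define \<rho>0 where "\<rho>0 = (Jr powr (1/p) / Mr) powr (1/(\<alpha>+\<beta>))"
      have r0: "\<rho>0 > 0" using Mr Jr by (simp add: \<rho>0_def)
      define P where "P = Mr powr (1 - \<alpha>/(\<alpha>+\<beta>)) * Jr powr (\<alpha>/(\<alpha>+\<beta>)/p)"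
      have P1: "Mr * \<rho>0 powr \<alpha> = P" unfolding P_def \<rho>0_def by (rule R3(1)[OF Mr(2) Jr(2) \<alpha> \<beta> p])
      have P2: "Jr powr (1/p) * \<rho>0 powr (-\<beta>) = P" unfolding P_def \<rho>0_def by (rule R3(2)[OF Mr(2) Jr(2) \<alpha> \<beta> p])
      define Jp where "Jp = Jr powr (1/p)"
      have Jp: "Jp > 0" using Jr by (simp add: Jp_def)
      have pt: "ennreal (a * \<rho> powr (-a-1)) * F \<rho>
          \<le> ennreal (a * Mr) * (ennreal (\<rho> powr (\<alpha> - 1)) * indicator {0..\<rho>0} \<rho>)
            + ennreal (a * KB * Jp) * (ennreal (\<rho> powr (-\<beta> - 1)) * indicator {\<rho>0..} \<rho>)" for \<rho>
      proof (cases "\<rho> > 0")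
        case rp: True
        show ?thesis
        proof (cases "\<rho> \<le> \<rho>0")
          case True
          have "ennreal (a * \<rho> powr (-a-1)) * F \<rho> \<le> ennreal (a * \<rho> powr (-a-1)) * (ennreal (\<rho> powr (\<alpha> + a)) * ennreal Mr)"
            using F1[OF rp] Mr by (intro mult_left_mono) auto
          also have "\<dots> = ennreal (a * Mr * (\<rho> powr (-a-1) * \<rho> powr (\<alpha> + a)))"
            using a Mr by (simp add: ennreal_mult[symmetric] mult_ac)
          also have "\<rho> powr (-a-1) * \<rho> powr (\<alpha> + a) = \<rho> powr (\<alpha> - 1)"
            by (simp add: powr_add[symmetric])
          also have "ennreal (a * Mr * \<rho> powr (\<alpha> - 1)) = ennreal (a * Mr) * ennreal (\<rho> powr (\<alpha> - 1))"
            using a Mr by (simp add: ennreal_mult)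
          finally show ?thesis using True rp by (simp add: add_increasing2)
        next
          case False
          have "ennreal (a * \<rho> powr (-a-1)) * F \<rho> \<le> ennreal (a * \<rho> powr (-a-1)) * (ennreal (KB * \<rho> powr (a - \<beta>)) * ennreal Jp)"
            using F2[OF rp] Jr by (intro mult_left_mono) (auto simp: ennpowr_def Jp_def)
          also have "\<dots> = ennreal (a * KB * Jp * (\<rho> powr (-a-1) * \<rho> powr (a - \<beta>)))"
            using a KB Jp by (simp add: ennreal_mult[symmetric] mult_ac)
          also have "\<rho> powr (-a-1) * \<rho> powr (a - \<beta>) = \<rho> powr (-\<beta> - 1)"
            by (simp add: powr_add[symmetric] algebra_simps)
          also have "ennreal (a * KB * Jp * \<rho> powr (-\<beta> - 1)) = ennreal (a * KB * Jp) * ennreal (\<rho> powr (-\<beta> - 1))"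
            using a KB Jp by (simp add: ennreal_mult)
          finally show ?thesis using False rp by (simp add: add_increasing)
        qed
      qed (simp add: F0)
      have "(\<integral>\<^sup>+\<rho>. ennreal (a * \<rho> powr (-a-1)) * F \<rho> \<partial>lborel)
          \<le> (\<integral>\<^sup>+\<rho>. ennreal (a * Mr) * (ennreal (\<rho> powr (\<alpha> - 1)) * indicator {0..\<rho>0} \<rho>)
            + ennreal (a * KB * Jp) * (ennreal (\<rho> powr (-\<beta> - 1)) * indicator {\<rho>0..} \<rho>) \<partial>lborel)"
        by (intro nn_integral_mono pt)
      also have "\<dots> = ennreal (a * Mr) * (\<integral>\<^sup>+\<rho>. ennreal (\<rho> powr (\<alpha> - 1)) * indicator {0..\<rho>0} \<rho> \<partial>lborel)
            + ennreal (a * KB * Jp) * (\<integral>\<^sup>+\<rho>. ennreal (\<rho> powr (-\<beta> - 1)) * indicator {\<rho>0..} \<rho> \<partial>lborel)"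
        by (simp add: nn_integral_add nn_integral_cmult)
      also have "\<dots> = ennreal (a * Mr) * ennreal (\<rho>0 powr \<alpha> / \<alpha>) + ennreal (a * KB * Jp) * ennreal (\<rho>0 powr (-\<beta>) / \<beta>)"
        using PI1[OF \<alpha>, of \<rho>0] PI2[OF \<beta> r0] r0 by simp
      also have "\<dots> = ennreal (a / \<alpha> * (Mr * \<rho>0 powr \<alpha>) + a * KB / \<beta> * (Jp * \<rho>0 powr (-\<beta>)))"
        using a Mr KB Jp \<alpha> \<beta> by (simp add: ennreal_mult[symmetric] ennreal_plus[symmetric] mult_ac del: ennreal_plus)
      also have "\<dots> = ennreal (c * P)" using P1 P2 by (simp add: Jp_def c_def algebra_simps)
      also have "\<dots> = ennreal c * ennpowr M (1 - \<alpha>/(\<alpha>+\<beta>)) * ennpowr J (\<alpha>/(\<alpha>+\<beta>)/p)"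
        using c Mr Jr by (simp add: P_def ennpowr_def ennreal_mult mult.assoc)
      finally show ?thesis by (simp add: c_def)
    qed
  qed
qed



lemma kernel_layer:
  fixes f :: "'a::euclidean_space \<Rightarrow> real" and x :: 'a
  assumes f: "f \<in> borel_measurable lebesgue" and a: "a > 0"
  shows "(\<integral>\<^sup>+y. ennreal (\<bar>f y\<bar> / norm (x - y) powr a) \<partial>lebesgue)
    = (\<integral>\<^sup>+\<rho>. ennreal (a * \<rho> powr (-a-1)) * (\<integral>\<^sup>+y. ennreal \<bar>f y\<bar> * indicator (ball x \<rho>) y \<partial>lebesgue) \<partial>lborel)"
proof -
  define S where "S = {(y, r). dist x y < (r::real)}"
  have S: "S \<in> sets (lebesgue \<Otimes>\<^sub>M (lborel::real measure))" unfolding S_def by (rule S2)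
  define k where "k \<rho> = ennreal (a * \<rho> powr (-a-1))" for \<rho> :: real
  have k: "k \<in> borel_measurable borel" unfolding k_def by measurable
  have fm: "(\<lambda>y. ennreal \<bar>f y\<bar>) \<in> borel_measurable lebesgue" using f by measurable
  have pt: "ennreal (\<bar>f y\<bar> / norm (x - y) powr a) = ennreal \<bar>f y\<bar> * (\<integral>\<^sup>+\<rho>. k \<rho> * indicator S (y, \<rho>) \<partial>lborel)"
    if "y \<noteq> x" for y
  proof -
    define r where "r = dist x y"
    have r: "r > 0" using that by (simp add: r_def)
    have "(\<integral>\<^sup>+\<rho>. k \<rho> * indicator S (y, \<rho>) \<partial>lborel)
        = (\<integral>\<^sup>+\<rho>. ennreal a * (ennreal (\<rho> powr (-a-1)) * indicator {r<..} \<rho>) \<partial>lborel)"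
      using a by (intro nn_integral_cong) (auto simp: k_def S_def r_def indicator_def ennreal_mult)
    also have "\<dots> = ennreal a * (\<integral>\<^sup>+\<rho>. ennreal (\<rho> powr (-a-1)) * indicator {r<..} \<rho> \<partial>lborel)"
      by (intro nn_integral_cmult) measurable
    also have "\<dots> = ennreal a * ennreal (r powr (-a) / a)" using PI2'[OF a r] by simp
    also have "\<dots> = ennreal (r powr (-a))" using a by (simp add: ennreal_mult[symmetric])
    finally have "(\<integral>\<^sup>+\<rho>. k \<rho> * indicator S (y, \<rho>) \<partial>lborel) = ennreal (r powr (-a))" .
    moreover have "\<bar>f y\<bar> / norm (x - y) powr a = \<bar>f y\<bar> * r powr (-a)"
      by (simp add: r_def dist_norm powr_minus_divide)
    ultimately show ?thesis by (simp add: ennreal_mult)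
  qed
  have ae: "AE y in lebesgue. y \<noteq> x" by (intro AE_completion AE_lborel_singleton)
  have "(\<integral>\<^sup>+y. ennreal (\<bar>f y\<bar> / norm (x - y) powr a) \<partial>lebesgue)
      = (\<integral>\<^sup>+y. ennreal \<bar>f y\<bar> * (\<integral>\<^sup>+\<rho>. k \<rho> * indicator S (y, \<rho>) \<partial>lborel) \<partial>lebesgue)"
    by (intro nn_integral_cong_AE) (use ae in eventually_elim, use pt in auto)
  also have "\<dots> = (\<integral>\<^sup>+\<rho>. k \<rho> * (\<integral>\<^sup>+y. ennreal \<bar>f y\<bar> * indicator S (y, \<rho>) \<partial>lebesgue) \<partial>lborel)"
    by (rule tonelli_leb[OF fm k S])
  also have "\<dots> = (\<integral>\<^sup>+\<rho>. ennreal (a * \<rho> powr (-a-1)) * (\<integral>\<^sup>+y. ennreal \<bar>f y\<bar> * indicator (ball x \<rho>) y \<partial>lebesgue) \<partial>lborel)"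
    by (intro nn_integral_cong) (simp add: k_def S_def indicator_def mem_ball)
  finally show ?thesis .
qed

theorem lemma4p6:
  fixes \<delta> s p \<kappa> :: real
  assumes n2: "DIM('a::euclidean_space) \<ge> 2"
    and \<delta>: "0 < \<delta>" "\<delta> \<le> real DIM('a)"
    and s: "1 \<le> s" "s < real DIM('a) / (real DIM('a) - 1)"
    and p: "\<delta> / real DIM('a) \<le> p" "p < \<delta> / (real DIM('a) + s * (1 - real DIM('a)))"
    and \<kappa>: "0 \<le> \<kappa>" "\<kappa> < real DIM('a) + s * (1 - real DIM('a))"
  shows "\<exists>c>0. \<forall>(f :: 'a \<Rightarrow> real) x. locally_integrable f \<longrightarrow>
     (\<integral>\<^sup>+ y. ennreal (\<bar>f y\<bar> / norm (x - y) powr (s * (real DIM('a) - 1))) \<partial>lebesgue)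
       \<le> ennreal c *
         ennpowr (frac_maximal \<kappa> f x)
           (1 - p * (real DIM('a) - \<kappa> + s * (1 - real DIM('a))) / (\<delta> - \<kappa> * p)) *
         ennpowr (choquet_integral \<delta> (\<lambda>y. \<bar>f y\<bar> powr p))
           ((real DIM('a) - \<kappa> + s * (1 - real DIM('a))) / (\<delta> - \<kappa> * p))"
proof -
  define n where "n = real DIM('a)"
  define a where "a = s * (n - 1)"
  define \<alpha> where "\<alpha> = n - \<kappa> - a"
  define \<beta> where "\<beta> = \<delta> / p - n + a"
  define KB where "KB = unit_ball_vol n * (1 + 1/p)"
  define c where "c = a/\<alpha> + a*KB/\<beta>"
  have n: "n \<ge> 2" using n2 by (simp add: n_def)
  have a0: "a > 0" using n s by (simp add: a_def)
  have na: "n + s * (1 - n) = n - a" by (simp add: a_def algebra_simps)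
  have an: "a < n"
  proof -
    have "s * (n - 1) < n / (n - 1) * (n - 1)" using s n by (intro mult_strict_right_mono) (auto simp: n_def)
    then show ?thesis using n by (simp add: a_def)
  qed
  have \<alpha>0: "\<alpha> > 0" using \<kappa> na by (simp add: \<alpha>_def n_def)
  have p0: "p > 0" using p(1) \<delta> n by (smt (verit) divide_pos_pos n_def)
  have pna: "p * (n - a) < \<delta>"
  proof -
    have "p < \<delta> / (n - a)" using p(2) na by (simp add: n_def)
    then show ?thesis using an by (simp add: pos_less_divide_eq)
  qed
  have \<beta>0: "\<beta> > 0"
  proof -
    have "n - a < \<delta> / p" using pna p0 by (simp add: field_simps)
    then show ?thesis by (simp add: \<beta>_def)
  qed
  have kp: "\<kappa> * p < \<delta>"
  proof -
    have "\<kappa> * p \<le> (n - a) * p" using \<kappa> na p0 by (intro mult_right_mono) (auto simp: n_def)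
    then show ?thesis using pna by (simp add: mult.commute)
  qed
  have ab: "\<alpha> + \<beta> = (\<delta> - \<kappa> * p) / p" using p0 by (simp add: \<alpha>_def \<beta>_def field_simps)
  have num: "real DIM('a) - \<kappa> + s * (1 - real DIM('a)) = \<alpha>" using na by (simp add: \<alpha>_def n_def)
  have e1: "1 - p * (real DIM('a) - \<kappa> + s * (1 - real DIM('a))) / (\<delta> - \<kappa> * p) = 1 - \<alpha>/(\<alpha>+\<beta>)"
  proof -
    have d: "\<delta> - \<kappa> * p \<noteq> 0" using kp by simp
    show ?thesis unfolding num ab using p0 d by (simp add: field_simps)
  qed
  have e2: "(real DIM('a) - \<kappa> + s * (1 - real DIM('a))) / (\<delta> - \<kappa> * p) = \<alpha>/(\<alpha>+\<beta>)/p"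
  proof -
    have d: "\<delta> - \<kappa> * p \<noteq> 0" using kp by simp
    show ?thesis unfolding num ab using p0 d by (simp add: field_simps)
  qed
  have KB0: "KB > 0" using p0 by (simp add: KB_def n_def add_pos_pos)
  have c0: "c > 0" unfolding c_def using a0 \<alpha>0 \<beta>0 KB0 by (intro add_pos_pos divide_pos_pos mult_pos_pos)
  show ?thesis
  proof (intro exI[of _ c] conjI allI impI c0)
    fix f :: "'a \<Rightarrow> real" and x :: 'a
    assume li: "locally_integrable f"
    then have f: "f \<in> borel_measurable lebesgue" by (simp add: locally_integrable_def)
    define F where "F \<rho> = (\<integral>\<^sup>+y. ennreal \<bar>f y\<bar> * indicator (ball x \<rho>) y \<partial>lebesgue)" for \<rho>
    define M where "M = frac_maximal \<kappa> f x"
    define J where "J = choquet_integral \<delta> (\<lambda>y. \<bar>f y\<bar> powr p)"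
    have LHS: "(\<integral>\<^sup>+ y. ennreal (\<bar>f y\<bar> / norm (x - y) powr (s * (real DIM('a) - 1))) \<partial>lebesgue)
        = (\<integral>\<^sup>+\<rho>. ennreal (a * \<rho> powr (-a-1)) * F \<rho> \<partial>lborel)"
      unfolding F_def a_def n_def by (rule kernel_layer[OF f a0[unfolded a_def n_def]])
    have F1: "F \<rho> \<le> ennreal (\<rho> powr (\<alpha> + a)) * M" if r: "\<rho> > 0" for \<rho>
    proof -
      have "ennreal (\<rho> powr (\<kappa> - n)) * F \<rho> \<le> M"
        unfolding M_def frac_maximal_def F_def n_def using r by (intro SUP_upper2[of \<rho>]) auto
      then have "ennreal (\<rho> powr (\<alpha> + a)) * (ennreal (\<rho> powr (\<kappa> - n)) * F \<rho>) \<le> ennreal (\<rho> powr (\<alpha> + a)) * M"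
        by (rule mult_left_mono) simp
      moreover have "ennreal (\<rho> powr (\<alpha> + a)) * (ennreal (\<rho> powr (\<kappa> - n)) * F \<rho>) = F \<rho>"
      proof -
        have "ennreal (\<rho> powr (\<alpha> + a)) * ennreal (\<rho> powr (\<kappa> - n)) = ennreal (\<rho> powr (\<alpha> + a) * \<rho> powr (\<kappa> - n))"
          by (simp add: ennreal_mult)
        also have "\<rho> powr (\<alpha> + a) * \<rho> powr (\<kappa> - n) = 1"
          using r by (simp add: powr_add[symmetric] \<alpha>_def)
        finally show ?thesis by (simp add: mult.assoc[symmetric])
      qed
      ultimately show ?thesis by simp
    qed
    have F2: "F \<rho> \<le> ennreal (KB * \<rho> powr (a - \<beta>)) * ennpowr J (1/p)" if r: "\<rho> > 0" for \<rho>
    proof -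
      have "F \<rho> \<le> ennreal (unit_ball_vol (real DIM('a)) * (1 + 1/p) * \<rho> powr (real DIM('a) - \<delta>/p))
          * ennpowr (choquet_integral \<delta> (\<lambda>y. \<bar>f y\<bar> powr p)) (1/p)"
        unfolding F_def using p0 p(1) by (intro ball_bound[OF f r \<delta>]) auto
      also have "real DIM('a) - \<delta>/p = a - \<beta>" by (simp add: \<beta>_def n_def)
      finally show ?thesis by (simp add: KB_def J_def n_def)
    qed
    have F0: "F \<rho> = 0" if "\<rho> \<le> 0" for \<rho>
    proof -
      have i0: "\<And>y. indicator (ball x \<rho>) y = (0::ennreal)"
        using that by (simp add: indicator_def mem_ball) (metis dist_not_less_zero not_less order_trans)
      show ?thesis unfolding F_def i0 by simp
    qed
    have "(\<integral>\<^sup>+\<rho>. ennreal (a * \<rho> powr (-a-1)) * F \<rho> \<partial>lborel)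
        \<le> ennreal (a/\<alpha> + a*KB/\<beta>) * ennpowr M (1 - \<alpha>/(\<alpha>+\<beta>)) * ennpowr J (\<alpha>/(\<alpha>+\<beta>)/p)"
      by (rule final_bound[OF a0 \<alpha>0 \<beta>0 KB0 p0 F1 F2 F0])
    then show "(\<integral>\<^sup>+ y. ennreal (\<bar>f y\<bar> / norm (x - y) powr (s * (real DIM('a) - 1))) \<partial>lebesgue)
       \<le> ennreal c *
         ennpowr (frac_maximal \<kappa> f x)
           (1 - p * (real DIM('a) - \<kappa> + s * (1 - real DIM('a))) / (\<delta> - \<kappa> * p)) *
         ennpowr (choquet_integral \<delta> (\<lambda>y. \<bar>f y\<bar> powr p))
           ((real DIM('a) - \<kappa> + s * (1 - real DIM('a))) / (\<delta> - \<kappa> * p))"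
      unfolding LHS e1 e2 by (simp add: c_def M_def J_def)
  qed
qed

end
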